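(* Let $s_\theta$ be the Sturmian word of irrational slope $\theta\in(0,1)$. For every $m\ge1$, every $1\le k\le m$, and every ordered partition $P_k=(p_1,\dots,p_k)$ of $m$, the set $\mathcal{L}_{(m,k)}$ of $P_k$-partitioned factors of length $m$ of $s_\theta$ admits exactly $k+1$ varieties.
   Context: For irrational $\theta\in(0,1)$, $s_\theta=s_0s_1s_2\cdots$ is the infinite word over $\{a<b\}$ with $s_n=a$ if $\{n\theta\}\in[0,1-\theta)$ and $s_n=b$ if $\{n\theta\}\in[1-\theta,1)$, where $\{x\}$ denotes the fractional part. A factor of length $m$ is a word $s_j\cdots s_{j+m-1}$, $j\ge0$; $\mathcal{L}_m$ is the set of factors of length $m$. For an ordered partition $P_k=(p_1,\dots,p_k)$ of $m$ (positive integers summing to $m$), $\mathcal{L}_{(m,k)}$ is the set of factorizations $u=u_1\cdots u_k$, $|u_i|=p_i$, of the $u\in\mathcal{L}_m$. The height profile of $u$ is $\langle |u_1|_b,\dots,|u_k|_b\rangle$ ($|v|_b$ = number of $b$'s in $v$); partitioned factors with equal height profiles are of the same variety, and varieties are the equivalence classes. *)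

theory Defs
  imports Complex_Main
begin

datatype letter = a | b

definition sturm :: "real \<Rightarrow> nat \<Rightarrow> letter" where
  "sturm \<theta> n = (if frac (real n * \<theta>) < 1 - \<theta> then a else b)"

definition factor_at :: "real \<Rightarrow> nat \<Rightarrow> nat \<Rightarrow> letter list" where
  "factor_at \<theta> j m = map (sturm \<theta>) [j..<j+m]"

definition factors :: "real \<Rightarrow> nat \<Rightarrow> letter list set" where
  "factors \<theta> m = {factor_at \<theta> j m | j. True}"

definition ordered_partition :: "nat list \<Rightarrow> nat \<Rightarrow> nat \<Rightarrow> bool" where
  "ordered_partition ps m k \<longleftrightarrow> length ps = k \<and> (\<forall>p\<in>set ps. 0 < p) \<and> sum_list ps = m"

fun split_by :: "nat list \<Rightarrow> 'x list \<Rightarrow> 'x list list" where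
  "split_by [] u = []"
| "split_by (p # ps) u = take p u # split_by ps (drop p u)"

definition partitioned_factors :: "real \<Rightarrow> nat list \<Rightarrow> letter list list set" where
  "partitioned_factors \<theta> ps = split_by ps ` factors \<theta> (sum_list ps)"

definition count_b :: "letter list \<Rightarrow> nat" where
  "count_b v = length (filter (\<lambda>x. x = b) v)"

definition height_profile :: "letter list list \<Rightarrow> nat list" where
  "height_profile us = map count_b us"

definition varieties :: "real \<Rightarrow> nat list \<Rightarrow> letter list list set set" where
  "varieties \<theta> ps = (\<lambda>h. {U \<in> partitioned_factors \<theta> ps. height_profile U = h})
                        ` (height_profile ` partitioned_factors \<theta> ps)"

end

theory Submission
  imports Defs "HOL-Analysis.Kronecker_Approximation_Theorem"
begin

lemma sturm_step:
  assumes "0 < \<theta>" "\<theta> < 1"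
  shows "\<lfloor>real (Suc n) * \<theta>\<rfloor> = \<lfloor>real n * \<theta>\<rfloor> + (if sturm \<theta> n = b then 1 else 0)"
proof -
  have e: "real (Suc n) * \<theta> = real n * \<theta> + \<theta>" by (simp add: algebra_simps)
  have f: "frac \<theta> = \<theta>" "\<lfloor>\<theta>\<rfloor> = 0" using assms by (auto simp: frac_eq floor_eq_iff)
  show ?thesis unfolding e floor_add f using assms by (auto simp: sturm_def)
qed

lemma count_b_snoc: "count_b (xs @ [y]) = count_b xs + (if y = b then 1 else 0)"
  by (simp add: count_b_def)

lemma count_factor:
  assumes "0 < \<theta>" "\<theta> < 1"
  shows "int (count_b (factor_at \<theta> j p)) = \<lfloor>real (j+p) * \<theta>\<rfloor> - \<lfloor>real j * \<theta>\<rfloor>"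
proof (induction p)
  case 0
  then show ?case by (simp add: factor_at_def count_b_def)
next
  case (Suc p)
  have "factor_at \<theta> j (Suc p) = factor_at \<theta> j p @ [sturm \<theta> (j+p)]"
    by (simp add: factor_at_def)
  then show ?case using Suc sturm_step[OF assms, of "j+p"]
    by (simp add: count_b_snoc)
qed

fun pr :: "real \<Rightarrow> nat list \<Rightarrow> nat \<Rightarrow> real \<Rightarrow> int list" where
  "pr \<theta> [] c x = []"
| "pr \<theta> (p # ps) c x = (\<lfloor>x + real (c+p) * \<theta>\<rfloor> - \<lfloor>x + real c * \<theta>\<rfloor>) # pr \<theta> ps (c+p) x"

fun cuts :: "nat \<Rightarrow> nat list \<Rightarrow> nat list" where
  "cuts c [] = []"
| "cuts c (p # ps) = (c+p) # cuts (c+p) ps"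

lemma floor_shift:
  "\<lfloor>real (j+c) * \<theta>\<rfloor> = \<lfloor>real j * \<theta>\<rfloor> + \<lfloor>frac (real j * \<theta>) + real c * \<theta>\<rfloor>"
proof -
  have "real (j+c) * \<theta> = (frac (real j * \<theta>) + real c * \<theta>) + of_int \<lfloor>real j * \<theta>\<rfloor>"
    by (simp add: frac_def algebra_simps)
  then show ?thesis by (metis floor_add_int add.commute)
qed

lemma take_factor: "take p (factor_at \<theta> i (p+s)) = factor_at \<theta> i p"
  by (simp add: factor_at_def take_map add.assoc)

lemma drop_factor: "drop p (factor_at \<theta> i (p+s)) = factor_at \<theta> (i+p) s"
  by (simp add: factor_at_def drop_map add.assoc)

lemma hp_eq:
  assumes "0 < \<theta>" "\<theta> < 1"
  shows "map int (height_profile (split_by ps (factor_at \<theta> (j+c) (sum_list ps))))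
     = pr \<theta> ps c (frac (real j * \<theta>))"
proof (induction ps arbitrary: c)
  case Nil
  then show ?case by (simp add: height_profile_def)
next
  case (Cons p ps)
  have h: "int (count_b (factor_at \<theta> (j+c) p))
     = \<lfloor>frac (real j * \<theta>) + real (c+p) * \<theta>\<rfloor> - \<lfloor>frac (real j * \<theta>) + real c * \<theta>\<rfloor>"
    using count_factor[OF assms, of "j+c" p] floor_shift[of j "c+p" \<theta>] floor_shift[of j c \<theta>]
    by (simp add: add.assoc)
  have "map int (height_profile (split_by ps (factor_at \<theta> (j+c+p) (sum_list ps))))
     = pr \<theta> ps (c+p) (frac (real j * \<theta>))"
    using Cons.IH[of "c+p"] by (simp add: add.assoc)
  then show ?case using h
    by (simp add: take_factor drop_factor height_profile_def)
qed

lemma pr_eq: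
  assumes "\<lfloor>x + real c * \<theta>\<rfloor> = \<lfloor>y + real c * \<theta>\<rfloor>"
  shows "pr \<theta> ps c x = pr \<theta> ps c y \<longleftrightarrow>
    (\<forall>c'\<in>set (cuts c ps). \<lfloor>x + real c' * \<theta>\<rfloor> = \<lfloor>y + real c' * \<theta>\<rfloor>)"
  using assms
proof (induction ps arbitrary: c)
  case Nil
  then show ?case by simp
next
  case (Cons p ps)
  show ?case
  proof (cases "\<lfloor>x + real (c+p) * \<theta>\<rfloor> = \<lfloor>y + real (c+p) * \<theta>\<rfloor>")
    case True
    then show ?thesis using Cons.IH[OF True] Cons.prems by simp
  next
    case False
    then show ?thesis using Cons.prems by auto
  qed
qed

lemma cuts_gt: "\<forall>p\<in>set ps. 0 < p \<Longrightarrow> c' \<in> set (cuts c ps) \<Longrightarrow> c < c'"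
  by (induction ps arbitrary: c) (auto, fastforce)

lemma cuts_distinct: "\<forall>p\<in>set ps. 0 < p \<Longrightarrow> distinct (cuts c ps)"
proof (induction ps arbitrary: c)
  case Nil
  then show ?case by simp
next
  case (Cons p ps)
  then show ?case using cuts_gt[of ps "c+p"] by auto
qed

lemma cuts_length: "length (cuts c ps) = length ps"
  by (induction ps arbitrary: c) auto

lemma frac_inj:
  assumes "\<theta> \<notin> \<rat>" "frac (real c1 * \<theta>) = frac (real c2 * \<theta>)"
  shows "c1 = c2"
proof (rule ccontr)
  assume ne: "c1 \<noteq> c2"
  have "(real c1 - real c2) * \<theta> = of_int (\<lfloor>real c1 * \<theta>\<rfloor> - \<lfloor>real c2 * \<theta>\<rfloor>)"
    using assms(2) by (simp add: frac_def algebra_simps)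
  then have "\<theta> = of_int (\<lfloor>real c1 * \<theta>\<rfloor> - \<lfloor>real c2 * \<theta>\<rfloor>) / (real c1 - real c2)"
    using ne by (simp add: field_simps)
  also have "\<dots> \<in> \<rat>" by (intro Rats_divide Rats_of_int Rats_diff Rats_of_nat)
  finally show False using assms(1) by simp
qed

lemma floor_thr:
  assumes "0 \<le> x" "x < 1"
  shows "\<lfloor>x + y\<rfloor> = \<lfloor>y\<rfloor> + (if 1 - frac y \<le> x then 1 else 0)"
proof -
  have "frac x = x" "\<lfloor>x\<rfloor> = 0" using assms by (auto simp: frac_eq floor_eq_iff)
  then show ?thesis unfolding floor_add[of x y] by auto
qed

lemma cnt_iff:
  fixes T :: "real set"
  assumes "finite T"
  shows "(\<forall>t\<in>T. (t \<le> x \<longleftrightarrow> t \<le> y)) \<longleftrightarrow> card {t\<in>T. t \<le> x} = card {t\<in>T. t \<le> y}"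
proof
  assume "\<forall>t\<in>T. (t \<le> x \<longleftrightarrow> t \<le> y)"
  then have "{t\<in>T. t \<le> x} = {t\<in>T. t \<le> y}" by auto
  then show "card {t\<in>T. t \<le> x} = card {t\<in>T. t \<le> y}" by simp
next
  assume c: "card {t\<in>T. t \<le> x} = card {t\<in>T. t \<le> y}"
  have fin: "finite {t\<in>T. t \<le> z}" for z using assms by simp
  show "\<forall>t\<in>T. (t \<le> x \<longleftrightarrow> t \<le> y)"
  proof (cases "x \<le> y")
    case True
    then have "{t\<in>T. t \<le> x} \<subseteq> {t\<in>T. t \<le> y}" by auto
    then have "{t\<in>T. t \<le> x} = {t\<in>T. t \<le> y}" using card_subset_eq[OF fin] c by metis
    then show ?thesis by blast
  next
    case False
    then have "{t\<in>T. t \<le> y} \<subseteq> {t\<in>T. t \<le> x}" by auto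
    then have "{t\<in>T. t \<le> y} = {t\<in>T. t \<le> x}" using card_subset_eq[OF fin] c by metis
    then show ?thesis by blast
  qed
qed

lemma interval_exists:
  fixes T :: "real set"
  assumes "finite T"
  shows "T \<subseteq> {0<..<1} \<Longrightarrow> l \<le> card T \<Longrightarrow>
    \<exists>u v. 0 \<le> u \<and> u < v \<and> v \<le> 1 \<and> (\<forall>x. u < x \<and> x < v \<longrightarrow> card {t\<in>T. t \<le> x} = l)"
  using assms
proof (induction T arbitrary: l rule: finite_linorder_max_induct)
  case empty
  then show ?case by (intro exI[of _ 0] exI[of _ 1]) auto
next
  case (insert z A)
  have zA: "z \<notin> A" using insert by auto
  have cardI: "card (insert z A) = card A + 1" using insert zA by simp
  have z01: "0 < z" "z < 1" using insert.prems by auto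
  show ?case
  proof (cases "l = card A + 1")
    case True
    have "\<forall>x. z < x \<and> x < 1 \<longrightarrow> card {t\<in>insert z A. t \<le> x} = l"
    proof (intro allI impI)
      fix x assume "z < x \<and> x < 1"
      then have "{t\<in>insert z A. t \<le> x} = insert z A" using insert.hyps by force
      then show "card {t\<in>insert z A. t \<le> x} = l" using True cardI by simp
    qed
    then show ?thesis using z01 by (intro exI[of _ z] exI[of _ 1]) auto
  next
    case False
    define u0 where "u0 = Max (insert 0 A)"
    have u0: "0 \<le> u0" "u0 < z" "\<forall>a\<in>A. a \<le> u0"
      using insert.hyps z01 unfolding u0_def by auto
    have lowint: "card {t\<in>insert z A. t \<le> x} = card A" if "u0 < x" "x < z" for x
    proof -
      have "{t\<in>insert z A. t \<le> x} = A" using u0 that by force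
      then show ?thesis by simp
    qed
    show ?thesis
    proof (cases "l = card A")
      case True
      then show ?thesis using u0 z01 lowint by (intro exI[of _ u0] exI[of _ z]) auto
    next
      case False2: False
      then have "l < card A" using False insert.prems cardI by linarith
      then obtain u v where uv: "0 \<le> u" "u < v" "v \<le> 1"
        "\<forall>x. u < x \<and> x < v \<longrightarrow> card {t\<in>A. t \<le> x} = l"
        using insert.IH[of l] insert.prems by auto
      have uz: "u < z"
      proof (rule ccontr)
        assume "\<not> u < z"
        define x where "x = (u+v)/2"
        have "u < x" "x < v" using uv unfolding x_def by auto
        then have "card {t\<in>A. t \<le> x} = l" using uv by auto
        moreover have "{t\<in>A. t \<le> x} = A" using insert.hyps \<open>\<not> u < z\<close> \<open>u < x\<close> by force
        ultimately show False using \<open>l < card A\<close> by simp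
      qed
      have "\<forall>x. u < x \<and> x < min v z \<longrightarrow> card {t\<in>insert z A. t \<le> x} = l"
      proof (intro allI impI)
        fix x assume x: "u < x \<and> x < min v z"
        then have "{t\<in>insert z A. t \<le> x} = {t\<in>A. t \<le> x}" by auto
        then show "card {t\<in>insert z A. t \<le> x} = l" using uv x by auto
      qed
      then show ?thesis using uv uz z01 by (intro exI[of _ u] exI[of _ "min v z"]) auto
    qed
  qed
qed

lemma card_range_eq:
  assumes "\<And>i j. f i = f j \<longleftrightarrow> g i = g j"
  shows "card (range f) = card (range g)"
proof -
  define h where "h y = f (SOME i. g i = y)" for y
  have "range f = h ` range g"
  proof
    show "range f \<subseteq> h ` range g"
    proof
      fix y assume "y \<in> range f"
      then obtain i where i: "y = f i" by auto
      have "g (SOME j. g j = g i) = g i" by (rule someI) simp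
      then have "h (g i) = f i" unfolding h_def using assms by blast
      then show "y \<in> h ` range g" using i by (metis rangeI image_eqI)
    qed
  next
    show "h ` range g \<subseteq> range f" unfolding h_def by auto
  qed
  moreover have "inj_on h (range g)"
  proof (rule inj_onI)
    fix y1 y2 assume "y1 \<in> range g" "y2 \<in> range g" "h y1 = h y2"
    then obtain i1 i2 where "y1 = g i1" "y2 = g i2" by auto
    have 1: "g (SOME j. g j = g i1) = g i1" by (rule someI) simp
    have 2: "g (SOME j. g j = g i2) = g i2" by (rule someI) simp
    from \<open>h y1 = h y2\<close> have "g (SOME j. g j = y1) = g (SOME j. g j = y2)"
      unfolding h_def using assms by blast
    then show "y1 = y2" using 1 2 \<open>y1 = g i1\<close> \<open>y2 = g i2\<close> by simp
  qed
  ultimately show ?thesis by (simp add: card_image)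
qed

theorem mainTheorem4:
  fixes \<theta> :: real and m k :: nat and ps :: "nat list"
  assumes "\<theta> \<notin> \<rat>" and "0 < \<theta>" and "\<theta> < 1"
    and "1 \<le> m" and "1 \<le> k" and "k \<le> m"
    and "ordered_partition ps m k"
  shows "card (varieties \<theta> ps) = k + 1"
proof -
  note th = assms(2,3)
  have len: "length ps = k" and pos: "\<forall>p\<in>set ps. 0 < p" and sm: "sum_list ps = m"
    using assms(7) unfolding ordered_partition_def by auto
  define H where "H j = height_profile (split_by ps (factor_at \<theta> j (sum_list ps)))" for j
  define X where "X j = frac (real j * \<theta>)" for j
  define cs where "cs = set (cuts 0 ps)"
  define T where "T = (\<lambda>c. 1 - frac (real c * \<theta>)) ` cs"
  define N where "N x = card {t\<in>T. t \<le> x}" for x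
  have PF: "height_profile ` partitioned_factors \<theta> ps = range H"
    unfolding partitioned_factors_def factors_def H_def by auto
  have "card (varieties \<theta> ps) = card (height_profile ` partitioned_factors \<theta> ps)"
    unfolding varieties_def
  proof (rule card_image, rule inj_onI)
    fix h1 h2 assume h: "h1 \<in> height_profile ` partitioned_factors \<theta> ps"
      "h2 \<in> height_profile ` partitioned_factors \<theta> ps"
      "{U \<in> partitioned_factors \<theta> ps. height_profile U = h1} =
       {U \<in> partitioned_factors \<theta> ps. height_profile U = h2}"
    then obtain U where "U \<in> partitioned_factors \<theta> ps" "height_profile U = h1" by auto
    then show "h1 = h2" using h(3) by blast
  qed
  then have c1: "card (varieties \<theta> ps) = card (range H)" using PF by simp
  have finT: "finite T" unfolding T_def cs_def by simp
  have csgt: "\<And>c. c \<in> cs \<Longrightarrow> 0 < c" unfolding cs_def using cuts_gt[OF pos] by blast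
  have X01: "0 \<le> X j" "X j < 1" for j unfolding X_def by (auto simp: frac_lt_1)
  have fl0: "\<lfloor>X q\<rfloor> = 0" for q using X01[of q] by (simp add: floor_eq_iff)
  have HX: "H i = H j \<longleftrightarrow> N (X i) = N (X j)" for i j
  proof -
    have "H i = H j \<longleftrightarrow> map int (H i) = map int (H j)"
      by (simp add: inj_map_eq_map inj_on_def)
    also have "\<dots> \<longleftrightarrow> pr \<theta> ps 0 (X i) = pr \<theta> ps 0 (X j)"
      using hp_eq[OF th, of ps i 0] hp_eq[OF th, of ps j 0] unfolding H_def X_def by simp
    also have "\<dots> \<longleftrightarrow> (\<forall>c\<in>cs. \<lfloor>X i + real c * \<theta>\<rfloor> = \<lfloor>X j + real c * \<theta>\<rfloor>)"
      unfolding cs_def using fl0 by (intro pr_eq) simp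
    also have "\<dots> \<longleftrightarrow> (\<forall>c\<in>cs. (1 - frac (real c * \<theta>) \<le> X i \<longleftrightarrow> 1 - frac (real c * \<theta>) \<le> X j))"
      using floor_thr[OF X01(1,2)[of i]] floor_thr[OF X01(1,2)[of j]] by auto
    also have "\<dots> \<longleftrightarrow> (\<forall>t\<in>T. (t \<le> X i \<longleftrightarrow> t \<le> X j))" unfolding T_def by auto
    also have "\<dots> \<longleftrightarrow> N (X i) = N (X j)" unfolding N_def by (rule cnt_iff[OF finT])
    finally show ?thesis .
  qed
  have c2: "card (range H) = card (range (\<lambda>j. N (X j)))"
    by (rule card_range_eq) (rule HX)
  have injT: "inj_on (\<lambda>c. 1 - frac (real c * \<theta>)) cs"
    by (rule inj_onI) (use frac_inj[OF assms(1)] in auto)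
  have cardcs: "card cs = k" unfolding cs_def
    using distinct_card[OF cuts_distinct[OF pos]] cuts_length len by simp
  have cardT: "card T = k" unfolding T_def using card_image[OF injT] cardcs by simp
  have T01: "T \<subseteq> {0<..<1}"
  proof
    fix t assume "t \<in> T"
    then obtain c where c: "c \<in> cs" "t = 1 - frac (real c * \<theta>)" unfolding T_def by auto
    have "frac (real c * \<theta>) \<noteq> frac (real 0 * \<theta>)"
      using frac_inj[OF assms(1), of c 0] csgt[OF c(1)] by auto
    then have "frac (real c * \<theta>) > 0" using frac_ge_0[of "real c * \<theta>"] by simp
    then show "t \<in> {0<..<1}" using c frac_lt_1[of "real c * \<theta>"] by auto
  qed
  have rng: "range (\<lambda>j. N (X j)) = {0..k}"
  proof
    show "range (\<lambda>j. N (X j)) \<subseteq> {0..k}"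
      using card_mono[OF finT] cardT unfolding N_def by fastforce
  next
    show "{0..k} \<subseteq> range (\<lambda>j. N (X j))"
    proof
      fix l assume "l \<in> {0..k}"
      then obtain u v where uv: "0 \<le> u" "u < v" "v \<le> 1"
        "\<forall>x. u < x \<and> x < v \<longrightarrow> N x = l"
        using interval_exists[OF finT T01, of l] cardT unfolding N_def by auto
      obtain n where n: "n > 0" "\<bar>frac (real n * \<theta>) - (u+v)/2\<bar> < (v-u)/2"
        using Kronecker_approx_1_explicit[OF assms(1), of "(u+v)/2" "(v-u)/2"] uv by auto
      then have "u < X n" "X n < v" unfolding X_def by (auto simp: abs_less_iff field_simps)
      then have "N (X n) = l" using uv by auto
      then show "l \<in> range (\<lambda>j. N (X j))" by (metis rangeI)
    qed
  qed
  show ?thesis using c1 c2 rng by simp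
qed

end
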